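(* Let $r\ge2$ and suppose that $w^\ast(r-1,3)$ exists but $w^\ast(r,3)$ does not exist. Then there exists an infinite word $d_1d_2d_3\cdots$ over a finite set of positive integers that contains no additive square, i.e. there are no $m\ge0$, $\ell\ge1$ with $\sum_{i=m+1}^{m+\ell}d_i=\sum_{i=m+\ell+1}^{m+2\ell}d_i$.
   Context: An increasing sequence of positive integers $a_1<a_2<\cdots$ contains a double $k$-term arithmetic progression if there are indices $p_1<\cdots<p_k$ such that both $\{p_1,\dots,p_k\}$ and $\{a_{p_1},\dots,a_{p_k}\}$ are arithmetic progressions. For an $r$-coloring of an interval, each color class is regarded as an increasing sequence by listing its elements in increasing order; a monochromatic double $k$-term arithmetic progression is a double $k$-term arithmetic progression in some color class. For integers $r,k\ge1$, $w^\ast(r,k)$ denotes the least integer $N$, if it exists, such that every $r$-coloring of $[1,N]=\{1,\dots,N\}$ has a monochromatic double $k$-term arithmetic progression. An additive square in a word $x_1x_2\cdots$ of integers is a pair of adjacent factors (blocks of consecutive letters) of the same length and the same sum. *)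

theory Defs
  imports Main
begin

text \<open>A strictly increasing finite sequence given as a list xs (xs!0 is a_1, ...).\<close>
definition has_double_AP :: "nat list \<Rightarrow> nat \<Rightarrow> bool" where
  "has_double_AP xs k \<longleftrightarrow>
     (\<exists>p d e. d \<ge> 1 \<and> p + (k - 1) * d < length xs \<and>
        (\<forall>i<k. xs ! (p + i * d) = xs ! p + i * e))"

definition color_class :: "(nat \<Rightarrow> nat) \<Rightarrow> nat \<Rightarrow> nat \<Rightarrow> nat list" where
  "color_class c N j = sorted_list_of_set {x \<in> {1..N}. c x = j}"

definition mono_double_AP :: "(nat \<Rightarrow> nat) \<Rightarrow> nat \<Rightarrow> nat \<Rightarrow> bool" where
  "mono_double_AP c N k \<longleftrightarrow> (\<exists>j. has_double_AP (color_class c N j) k)"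

definition wstar_exists :: "nat \<Rightarrow> nat \<Rightarrow> bool" where
  "wstar_exists r k \<longleftrightarrow>
     (\<exists>N. \<forall>c. (\<forall>x\<in>{1..N}. c x < r) \<longrightarrow> mono_double_AP c N k)"

definition has_additive_square :: "(nat \<Rightarrow> nat) \<Rightarrow> bool" where
  "has_additive_square d \<longleftrightarrow>
     (\<exists>m l. l \<ge> 1 \<and> (\<Sum>i=m+1..m+l. d i) = (\<Sum>i=m+l+1..m+2*l. d i))"

end

theory Submission
  imports Defs
begin

definition good :: "nat \<Rightarrow> nat \<Rightarrow> (nat \<Rightarrow> nat) \<Rightarrow> bool" where
"good M n f \<longleftrightarrow> (\<forall>i\<in>{1..n}. 1 \<le> f i \<and> f i \<le> M) \<and>
   (\<forall>m l. 1 \<le> l \<longrightarrow> m + 2*l \<le> n \<longrightarrow> (\<Sum>i=m+1..m+l. f i) \<noteq> (\<Sum>i=m+l+1..m+2*l. f i))"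

lemma good_mono: "good M n f \<Longrightarrow> k \<le> n \<Longrightarrow> good M k f"
  unfolding good_def by force

lemma good_cong: assumes "good M n f" "\<forall>i\<in>{1..n}. g i = f i" shows "good M n g"
  unfolding good_def
proof (intro conjI allI impI ballI)
  fix i assume "i \<in> {1..n}" thus "1 \<le> g i" "g i \<le> M" using assms unfolding good_def by auto
next
  fix m l assume l: "1 \<le> l" "m + 2*l \<le> n"
  have "(\<Sum>i=m+1..m+l. g i) = (\<Sum>i=m+1..m+l. f i)"
    by (rule sum.cong) (use assms(2) l in auto)
  moreover have "(\<Sum>i=m+l+1..m+2*l. g i) = (\<Sum>i=m+l+1..m+2*l. f i)"
    by (rule sum.cong) (use assms(2) l in auto)
  ultimately show "(\<Sum>i=m+1..m+l. g i) \<noteq> (\<Sum>i=m+l+1..m+2*l. g i)"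
    using assms(1) l unfolding good_def by auto
qed

definition ext where "ext M n f \<longleftrightarrow> (\<forall>k. \<exists>g. (\<forall>i\<in>{1..n}. g i = f i) \<and> good M (n+k) g)"

lemma ext_step: assumes "ext M n f" shows "\<exists>a. 1 \<le> a \<and> a \<le> M \<and> ext M (Suc n) (f(Suc n := a))"
proof (rule ccontr)
  assume "\<not> ?thesis"
  hence "\<forall>a\<in>{1..M}. \<exists>k. \<not>(\<exists>g. (\<forall>i\<in>{1..Suc n}. g i = (f(Suc n:=a)) i) \<and> good M (Suc n + k) g)"
    unfolding ext_def by auto
  then obtain K where K: "\<forall>a\<in>{1..M}. \<not>(\<exists>g. (\<forall>i\<in>{1..Suc n}. g i = (f(Suc n:=a)) i) \<and> good M (Suc n + K a) g)"
    by metis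
  define B where "B = Max (K ` {1..M})"
  from assms obtain g where g: "\<forall>i\<in>{1..n}. g i = f i" "good M (n + Suc B) g" unfolding ext_def by blast
  define a where "a = g (Suc n)"
  have a: "1 \<le> a \<and> a \<le> M" using g(2) unfolding good_def a_def by auto
  hence "K a \<le> B" unfolding B_def by (intro Max_ge) auto
  hence "good M (Suc n + K a) g" using g(2) good_mono by (metis add_Suc_shift add_le_cancel_left)
  moreover have "\<forall>i\<in>{1..Suc n}. g i = (f(Suc n:=a)) i"
  proof
    fix i assume i: "i \<in> {1..Suc n}"
    show "g i = (f(Suc n:=a)) i"
    proof (cases "i = Suc n")
      case True thus ?thesis by (simp add: a_def)
    next
      case False thus ?thesis using i g(1) by auto
    qed
  qed
  ultimately show False using K a by (meson atLeastAtMost_iff)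
qed

lemma koenig: assumes "\<forall>n. \<exists>f. good M n f" shows "\<exists>d. \<forall>n. good M n d"
proof -
  define step where "step = (\<lambda>n (h::nat\<Rightarrow>nat). h(Suc n := SOME a. 1\<le>a \<and> a\<le>M \<and> ext M (Suc n) (h(Suc n := a))))"
  define F where "F = rec_nat (\<lambda>_. 0::nat) step"
  have FS: "F (Suc n) = step n (F n)" for n by (simp add: F_def)
  have ex: "ext M n (F n)" for n
  proof (induction n)
    case 0 then show ?case using assms unfolding ext_def by auto
  next
    case (Suc n)
    from ext_step[OF Suc] have "\<exists>a. 1\<le>a \<and> a\<le>M \<and> ext M (Suc n) ((F n)(Suc n := a))" .
    from someI_ex[OF this] have "ext M (Suc n) ((F n)(Suc n := SOME a. 1\<le>a \<and> a\<le>M \<and> ext M (Suc n) ((F n)(Suc n := a))))" by blast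
    thus ?case by (simp only: FS step_def)
  qed
  have agree: "\<forall>i\<in>{1..n}. F (n+k) i = F n i" for n k
    by (induction k) (auto simp: FS step_def)
  define d where "d i = F i i" for i
  have "good M n d" for n
  proof -
    from ex[of n] obtain g where g: "\<forall>i\<in>{1..n}. g i = F n i" "good M (n+0) g" unfolding ext_def by blast
    have gn: "good M n (F n)" using good_cong[of M n g "F n"] g by auto
    have "\<forall>i\<in>{1..n}. d i = F n i"
    proof
      fix i assume i: "i \<in> {1..n}"
      have "F (i + (n-i)) i = F i i" using agree[of i "n-i"] i by auto
      thus "d i = F n i" using i by (simp add: d_def)
    qed
    thus ?thesis using good_cong[OF gn] by auto
  qed
  thus ?thesis by blast
qed

lemma ss_less_iff: "sorted_wrt (<) (L::nat list) \<Longrightarrow> i<length L \<Longrightarrow> j < length L \<Longrightarrow> L!i < L!j \<longleftrightarrow> i < j"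
  by (metis less_asym linorder_neqE_nat sorted_wrt_nth_less)

lemma card_below: fixes S :: "nat set" assumes "finite S" "i < card S"
  shows "card {y\<in>S. y < sorted_list_of_set S ! i} = (i::nat)"
proof -
  let ?L = "sorted_list_of_set S"
  have ss: "sorted_wrt (<) ?L" by (simp add: strict_sorted_list_of_set)
  have len: "length ?L = card S" by simp
  have "{y\<in>S. y < ?L ! i} = (!) ?L ` {0..<i}"
  proof
    show "{y\<in>S. y < ?L ! i} \<subseteq> (!) ?L ` {0..<i}"
    proof
      fix y assume y: "y \<in> {y\<in>S. y < ?L ! i}"
      then have "y \<in> set ?L" using assms by simp
      then obtain j where j: "j < length ?L" "y = ?L ! j" by (metis in_set_conv_nth)
      then have "j < i" using ss_less_iff[OF ss] y assms len by auto
      thus "y \<in> (!) ?L ` {0..<i}" using j by auto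
    qed
  next
    show "(!) ?L ` {0..<i} \<subseteq> {y\<in>S. y < ?L ! i}"
    proof
      fix y assume "y \<in> (!) ?L ` {0..<i}"
      then obtain j where j: "j < i" "y = ?L ! j" by auto
      have "j < length ?L" using j assms len by auto
      hence "y \<in> set ?L" using j(2) nth_mem by blast
      then have "y \<in> S" using assms by simp
      then show "y \<in> {y\<in>S. y < ?L ! i}" using ss_less_iff[OF ss] j assms len by auto
    qed
  qed
  moreover have "inj_on ((!) ?L) {0..<i}"
    using distinct_sorted_list_of_set[of S] assms len by (auto simp: inj_on_def nth_eq_iff_index_eq)
  ultimately show ?thesis by (simp add: card_image)
qed

lemma card_below_conv: assumes "finite S" "(x::nat) \<in> S" "card {y\<in>S. y<x} = i"
  shows "i < card S \<and> sorted_list_of_set S ! i = x"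
proof -
  have "x \<in> set (sorted_list_of_set S)" using assms by simp
  then obtain j where j: "j < length (sorted_list_of_set S)" "x = sorted_list_of_set S ! j" by (metis in_set_conv_nth)
  hence "card {y\<in>S. y<x} = j" using card_below[OF assms(1), of j] by simp
  thus ?thesis using j assms by simp
qed

lemma window:
  assumes M: "\<forall>c. (\<forall>x\<in>{1..M}. c x < r - 1) \<longrightarrow> mono_double_AP c M 3"
    and c: "\<forall>x\<in>{1..N}. c x < r" and nm: "\<not> mono_double_AP c N 3"
    and sM: "s + M \<le> N" and j: "j < r"
  shows "\<exists>x\<in>{s+1..s+M}. c x = j"
proof (rule ccontr)
  assume nx: "\<not> ?thesis"
  define c2 where "c2 y = (if c (y+s) > j then c(y+s) - 1 else c(y+s))" for y
  have cw: "c (y+s) < r \<and> c (y+s) \<noteq> j" if "y \<in> {1..M}" for y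
    using that c sM nx by auto
  have "\<forall>y\<in>{1..M}. c2 y < r - 1"
  proof
    fix y assume "y \<in> {1..M}"
    from cw[OF this] j show "c2 y < r - 1" unfolding c2_def by auto
  qed
  with M have "mono_double_AP c2 M 3" by blast
  then obtain j' p dd e where W: "dd \<ge> 1" "p + 2*dd < length (color_class c2 M j')"
    "\<forall>i<3. color_class c2 M j' ! (p + i*dd) = color_class c2 M j' ! p + i*e"
    unfolding mono_double_AP_def has_double_AP_def by auto
  define j2 where "j2 = (if j \<le> j' then j'+1 else j')"
  define T where "T = {y\<in>{1..M}. c2 y = j'}"
  define S where "S = {x\<in>{1..N}. c x = j2}"
  have TS: "y \<in> T \<longleftrightarrow> y\<in>{1..M} \<and> y + s \<in> S" for y
  proof (cases "y \<in> {1..M}")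
    case True
    then have "y + s \<in> {1..N}" using sM by auto
    with cw[OF True] show ?thesis using True
      unfolding T_def S_def c2_def j2_def by auto
  qed (auto simp: T_def)
  have fT: "finite T" and fS: "finite S" by (auto simp: T_def S_def)
  define k where "k = card {x\<in>S. x \<le> s}"
  let ?W = "sorted_list_of_set T"
  let ?L = "sorted_list_of_set S"
  have key: "k + i < card S \<and> ?L ! (k+i) = ?W ! i + s" if i: "i < card T" for i
  proof -
    have "?W ! i \<in> set ?W" using i by (simp add: nth_mem)
    hence wT: "?W ! i \<in> T" using fT by simp
    hence xS: "?W ! i + s \<in> S" using TS by blast
    have cT: "card {y\<in>T. y < ?W ! i} = i" using card_below[OF fT i] .
    have eq: "{y\<in>S. y < ?W ! i + s} = {y\<in>S. y \<le> s} \<union> (\<lambda>y. y+s) ` {y\<in>T. y < ?W ! i}"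
    proof
      show "{y\<in>S. y < ?W ! i + s} \<subseteq> {y\<in>S. y \<le> s} \<union> (\<lambda>y. y+s) ` {y\<in>T. y < ?W ! i}"
      proof
        fix y assume y: "y \<in> {y\<in>S. y < ?W ! i + s}"
        show "y \<in> {y\<in>S. y \<le> s} \<union> (\<lambda>y. y+s) ` {y\<in>T. y < ?W ! i}"
        proof (cases "y \<le> s")
          case True thus ?thesis using y by auto
        next
          case False
          have "?W ! i \<le> M" using wT by (auto simp: T_def)
          hence "y - s \<in> T" using TS[of "y-s"] y False by auto
          moreover have "y = (y - s) + s" using False by simp
          ultimately show ?thesis using y by auto
        qed
      qed
    next
      show "{y\<in>S. y \<le> s} \<union> (\<lambda>y. y+s) ` {y\<in>T. y < ?W ! i} \<subseteq> {y\<in>S. y < ?W ! i + s}"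
      proof -
        have "1 \<le> ?W ! i" using wT TS by auto
        thus ?thesis using TS xS by auto
      qed
    qed
    have "card {y\<in>S. y < ?W ! i + s} = k + i"
    proof -
      have d: "{y\<in>S. y \<le> s} \<inter> (\<lambda>y. y+s) ` {y\<in>T. y < ?W ! i} = {}"
        using TS by auto
      have "card ((\<lambda>y. y+s) ` {y\<in>T. y < ?W ! i}) = i"
        using cT by (simp add: card_image)
      thus ?thesis unfolding eq k_def using fS fT d by (simp add: card_Un_disjoint)
    qed
    from card_below_conv[OF fS xS this] show ?thesis .
  qed
  have lenW: "length (color_class c2 M j') = card T" by (simp add: color_class_def T_def)
  have Wd: "color_class c2 M j' = ?W" by (simp add: color_class_def T_def)
  have "has_double_AP ?L 3"
    unfolding has_double_AP_def
  proof (intro exI conjI allI impI)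
    show "1 \<le> dd" by fact
    show "k + p + (3 - 1) * dd < length ?L"
      using key[of "p + 2*dd"] W(2) lenW by (simp add: add.assoc)
    fix i :: nat assume i: "i < 3"
    have a: "k + p + i*dd = k + (p + i*dd)" by simp
    have "i*dd \<le> 2*dd" using i by (intro mult_right_mono) auto
    hence "p + i*dd < card T" using W(2) lenW by linarith
    hence "?L ! (k + (p + i*dd)) = ?W ! (p+i*dd) + s" using key by blast
    also have "... = ?W ! p + i*e + s" using W(3) i Wd by simp
    also have "... = ?L ! (k+p) + i*e" using key[of p] W(2) lenW by simp
    finally show "?L ! (k + p + i*dd) = ?L ! (k+p) + i*e" by (simp only: a)
  qed
  hence "mono_double_AP c N 3" unfolding mono_double_AP_def color_class_def S_def by blast
  with nm show False by blast
qed

lemma telescope: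
  fixes L :: "nat list"
  assumes mono: "\<forall>i j. i \<le> j \<longrightarrow> j < length L \<longrightarrow> L!i \<le> L!j"
  shows "a \<le> b \<Longrightarrow> b < length L \<Longrightarrow> (\<Sum>i=a+1..b. L!i - L!(i-1)) = L!b - L!a"
proof (induction b)
  case 0 thus ?case by simp
next
  case (Suc b)
  show ?case
  proof (cases "a = Suc b")
    case True thus ?thesis by simp
  next
    case False
    hence ab: "a \<le> b" using Suc.prems by simp
    have "(\<Sum>i=a+1..Suc b. L!i - L!(i-1)) = (\<Sum>i=a+1..b. L!i - L!(i-1)) + (L!(Suc b) - L!b)"
      using ab by (simp add: sum.cl_ivl_Suc)
    also have "... = L!b - L!a + (L!(Suc b) - L!b)" using Suc ab by simp
    also have "... = L!(Suc b) - L!a"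
    proof -
      have "L!a \<le> L!b" "L!b \<le> L!(Suc b)" using mono ab Suc.prems by auto
      thus ?thesis by arith
    qed
    finally show ?thesis .
  qed
qed

theorem mainTheorem2:
  fixes r :: nat
  assumes "r \<ge> 2"
    and "wstar_exists (r - 1) 3"
    and "\<not> wstar_exists r 3"
  shows "\<exists>d :: nat \<Rightarrow> nat. finite (d ` {1..}) \<and> (\<forall>i\<ge>1. d i > 0) \<and>
           \<not> has_additive_square d"
proof -
  obtain M where M: "\<forall>c. (\<forall>x\<in>{1..M}. c x < r - 1) \<longrightarrow> mono_double_AP c M 3"
    using assms(2) unfolding wstar_exists_def by blast
  have col: "\<exists>c. (\<forall>x\<in>{1..N}. c x < r) \<and> \<not> mono_double_AP c N 3" for N
    using assms(3) unfolding wstar_exists_def by blast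
  have r0: "0 < r" using assms(1) by simp
  have M1: "1 \<le> M"
  proof (rule ccontr)
    assume "\<not> 1 \<le> M"
    hence M0: "M = 0" by simp
    obtain c where "\<forall>x\<in>{1..0}. c x < r" "\<not> mono_double_AP c 0 3" using col by blast
    from window[OF M this, of 0 0] M0 r0 show False by auto
  qed
  have "\<forall>n. \<exists>f. good M n f"
  proof
    fix n
    define N where "N = (n+1)*M"
    obtain c where c: "\<forall>x\<in>{1..N}. c x < r" and nm: "\<not> mono_double_AP c N 3" using col by blast
    note win = window[OF M c nm _ r0]
    define S where "S = {x\<in>{1..N}. c x = 0}"
    define L where "L = sorted_list_of_set S"
    have fS: "finite S" by (simp add: S_def)
    have setL: "set L = S" using fS by (simp add: L_def)
    have ss: "sorted_wrt (<) L" by (simp add: L_def strict_sorted_list_of_set)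
    note sl = ss_less_iff[OF ss]
    have inS: "x \<in> S \<Longrightarrow> \<exists>j<length L. x = L!j" for x
      using setL by (metis in_set_conv_nth)
    have LS: "j < length L \<Longrightarrow> L!j \<in> S" for j using setL nth_mem by blast
    have mono: "\<forall>i j. i \<le> j \<longrightarrow> j < length L \<longrightarrow> L!i \<le> L!j"
      using sl by (metis le_less less_le_trans)
    have gap: "L!i < L!(i+1) \<and> L!(i+1) \<le> L!i + M" if i: "i+1 < length L" for i
    proof
      show "L!i < L!(i+1)" using sl i by simp
      show "L!(i+1) \<le> L!i + M"
      proof (rule ccontr)
        assume "\<not> ?thesis"
        moreover have "L!(i+1) \<le> N" using LS[OF i] by (simp add: S_def)
        ultimately obtain x where x: "x \<in> {L!i+1..L!i+M}" "c x = 0" using win[of "L!i"] by auto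
        have "x \<in> S" using x \<open>L!(i+1) \<le> N\<close> \<open>\<not> L!(i+1) \<le> L!i + M\<close> by (auto simp: S_def)
        then obtain j where j: "j < length L" "x = L!j" using inS by blast
        have "i < j" using sl[of i j] j x i by auto
        moreover have "j < i+1" using sl[of j "i+1"] j x i \<open>\<not> L!(i+1) \<le> L!i + M\<close> by auto
        ultimately show False by simp
      qed
    qed
    have bound: "i < length L \<Longrightarrow> L!i \<le> (i+1)*M" for i
    proof (induction i)
      case 0
      show ?case
      proof (rule ccontr)
        assume a: "\<not> ?thesis"
        have "0 + M \<le> N" by (simp add: N_def)
        from win[OF this] obtain x where x: "x \<in> {1..M}" "c x = 0" by auto
        have "x \<in> S" using x by (auto simp: S_def N_def)
        then obtain j where j: "j < length L" "x = L!j" using inS by blast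
        have "L!0 \<le> L!j" using mono j by blast
        thus False using a x j by simp
      qed
    next
      case (Suc i)
      thus ?case using gap[of i] by simp
    qed
    have lenL: "n < length L"
    proof (rule ccontr)
      assume "\<not> ?thesis"
      hence K: "length L \<le> n" by simp
      define K where "K = length L"
      have "K*M + M \<le> N" using K by (simp add: N_def K_def)
      from win[OF this] obtain x where x: "x \<in> {K*M+1..K*M+M}" "c x = 0" by auto
      have "x \<in> S" using x \<open>K*M + M \<le> N\<close> by (auto simp: S_def)
      then obtain j where j: "j < length L" "x = L!j" using inS by blast
      have "L!j \<le> (j+1)*M" using bound j by blast
      also have "... \<le> K*M" using j by (intro mult_right_mono) (auto simp: K_def)
      finally show False using x j by simp
    qed
    define f where "f i = L!i - L!(i-1)" for i
    have "good M n f"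
      unfolding good_def
    proof (intro conjI ballI allI impI)
      fix i assume i: "i \<in> {1..n}"
      hence "(i-1)+1 < length L" using lenL by auto
      from gap[OF this] i show "1 \<le> f i" "f i \<le> M" by (auto simp: f_def)
    next
      fix m l assume l: "1 \<le> (l::nat)" "m + 2*l \<le> n"
      have s1: "(\<Sum>i=m+1..m+l. f i) = L!(m+l) - L!m"
        unfolding f_def using telescope[OF mono, of m "m+l"] l lenL by simp
      have s2: "(\<Sum>i=m+l+1..m+2*l. f i) = L!(m+2*l) - L!(m+l)"
        unfolding f_def using telescope[OF mono, of "m+l" "m+2*l"] l lenL by simp
      show "(\<Sum>i=m+1..m+l. f i) \<noteq> (\<Sum>i=m+l+1..m+2*l. f i)"
      proof
        assume eq: "(\<Sum>i=m+1..m+l. f i) = (\<Sum>i=m+l+1..m+2*l. f i)"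
        have m1: "L!m \<le> L!(m+l)" "L!(m+l) \<le> L!(m+2*l)" using mono l lenL by auto
        have "has_double_AP L 3"
          unfolding has_double_AP_def
        proof (intro exI conjI allI impI)
          show "1 \<le> l" by fact
          show "m + (3-1)*l < length L" using l lenL by simp
          fix i :: nat assume "i < 3"
          hence "i = 0 \<or> i = 1 \<or> i = 2" by auto
          thus "L!(m + i*l) = L!m + i*(L!(m+l) - L!m)"
            using eq s1 s2 m1 by (auto simp: mult_2)
        qed
        hence "mono_double_AP c N 3" unfolding mono_double_AP_def color_class_def L_def S_def by blast
        with nm show False by blast
      qed
    qed
    thus "\<exists>f. good M n f" by blast
  qed
  from koenig[OF this] obtain d where d: "\<forall>n. good M n d" by blast
  have dr: "1 \<le> d i \<and> d i \<le> M" if "1 \<le> i" for i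
    using d[rule_format, of i] that unfolding good_def by auto
  have "d ` {1..} \<subseteq> {1..M}" using dr by auto
  hence "finite (d ` {1..})" by (rule finite_subset) simp
  moreover have "\<forall>i\<ge>1. d i > 0" using dr by fastforce
  moreover have "\<not> has_additive_square d"
    unfolding has_additive_square_def
  proof
    assume "\<exists>m l. l \<ge> 1 \<and> (\<Sum>i=m+1..m+l. d i) = (\<Sum>i=m+l+1..m+2*l. d i)"
    then obtain m l where "l \<ge> 1" "(\<Sum>i=m+1..m+l. d i) = (\<Sum>i=m+l+1..m+2*l. d i)" by blast
    with d[rule_format, of "m+2*l"] show False unfolding good_def by auto
  qed
  ultimately show ?thesis by blast
qed

end
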